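(* Let $d,T$, $K_t=\prod_jK_t^j$, $\Omega$, $\mathcal E_t$ and $\mathcal D_t,\mathcal D,V,V_t,U,U_t,S^U,S^{U_t}$ be as in the context. Then: 1. $\mathcal D_0,\dots,\mathcal D_T$ (as functionals on $\mathrm{ca}^1(\Omega)$) and $\mathcal D$ are $\sigma(\mathrm{ca}^1(\Omega),\mathcal E)$-lower semicontinuous. 2. If in addition $\mathrm{dom}(\mathcal D_t)\subseteq\mathrm{Prob}^1(K_t)$ for every $t$, then for every $\varphi=(\varphi_0,\dots,\varphi_T)\in\mathcal E$: $U(\varphi)=\sum_{t=0}^TU_t(\varphi_t)=\sum_{t=0}^T-V_t(-\varphi_t)$ and $S^U(\varphi)=\sum_{t=0}^TS^{U_t}(\varphi_t)$.
   Context: $d\ge1$, $T\ge1$, $K_t^j\subseteq\mathbb R$ closed, $K_t=\prod_{j}K_t^j$, $\Omega=K_0\times\dots\times K_T$. $C_t$: continuous $\phi$ on $K_t$ with $\sup|\phi(x_t)|/(1+\sum_j|x_t^j|)<\infty$; $C_{0:T}$: continuous $\phi$ on $\Omega$ with $\sup|\phi(x)|/(1+\sum_{t,j}|x_t^j|)<\infty$. $\mathcal E_t\subseteq C_t$ vector subspaces with $\mathcal E_t+\mathbb R=\mathcal E_t$, $\mathcal E=\mathcal E_0\times\dots\times\mathcal E_T$. $\mathrm{ca}^1(\Omega)$ (resp. $\mathrm{ca}^1(K_t)$) is the set of finite signed Borel measures $\gamma$ on $\Omega$ (resp. $K_t$) such that every element of $C_{0:T}$ (resp. $C_t$) is $|\gamma|$-integrable;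 $\mathrm{Prob}^1$ denotes the probability measures among them; $\gamma_t$ is the marginal of $\gamma$ on $K_t$. $\sigma(\mathrm{ca}^1(\Omega),\mathcal E)$ is the weakest topology making $\gamma\mapsto\int\varphi_t\,d\gamma$ continuous for all $\varphi_t\in\mathcal E_t$, $t=0,\dots,T$; similarly $\sigma(\mathrm{ca}^1(K_t),\mathcal E_t)$. For each $t$, $\mathcal D_t:\mathrm{ca}^1(K_t)\to(-\infty,+\infty]$ is proper, convex and $\sigma(\mathrm{ca}^1(K_t),\mathcal E_t)$-lower semicontinuous; for $\gamma\in\mathrm{ca}^1(\Omega)$ set $\mathcal D_t(\gamma):=\mathcal D_t(\gamma_t)$ and $\mathcal D(\gamma)=\sum_t\mathcal D_t(\gamma_t)$. $V(\varphi)=\sup_{\gamma\in\mathrm{ca}^1(\Omega)}(\int\sum_t\varphi_t\,d\gamma-\mathcal D(\gamma))$, $V_t(\varphi_t)=\sup_{\gamma\in\mathrm{ca}^1(K_t)}(\int\varphi_t\,d\gamma-\mathcal D_t(\gamma))$, $U(\varphi)=-V(-\varphi)$, $U_t(\varphi_t)=-V_t(-\varphi_t)$, $S^U(\varphi)=\sup_{\beta\in\mathbb R^{T+1}}(U(\varphi+\beta)-\sum_t\beta_t)$, $S^{U_t}(\varphi_t)=\sup_{\alpha\in\mathbb R}(U_t(\varphi_t+\alpha)-\alpha)$. Convention $+\infty-\infty=-\infty$. *)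

theory Defs
  imports "HOL-Analysis.Analysis" "HOL-Probability.Probability"
begin

text \<open>A finite signed measure on the measurable space M is represented by its set function
  'a set => real (value 0 on non-measurable sets).  It is always the difference of two finite
  measures (Jordan decomposition).  For a set F of test functions, ca1 M F is the set of finite
  signed measures gamma such that every element of F is |gamma|-integrable; equivalently gamma
  admits a decomposition gamma = mu - nu into finite measures for which every element of F is
  mu- and nu-integrable (take the Jordan decomposition; conversely gamma+ <= mu, gamma- <= nu).\<close>

definition signed_decomp :: "'a measure \<Rightarrow> ('a set \<Rightarrow> real) \<Rightarrow> 'a measure \<Rightarrow> 'a measure \<Rightarrow> bool" where
  "signed_decomp M \<gamma> \<mu> \<nu> \<longleftrightarrow> sets \<mu> = sets M \<and> sets \<nu> = sets M \<and>
     finite_measure \<mu> \<and> finite_measure \<nu> \<and> \<gamma> = (\<lambda>A. measure \<mu> A - measure \<nu> A)"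

definition ca1 :: "'a measure \<Rightarrow> ('a \<Rightarrow> real) set \<Rightarrow> ('a set \<Rightarrow> real) set" where
  "ca1 M F = {\<gamma>. \<exists>\<mu> \<nu>. signed_decomp M \<gamma> \<mu> \<nu> \<and> (\<forall>\<phi>\<in>F. integrable \<mu> \<phi> \<and> integrable \<nu> \<phi>)}"

text \<open>Integral of phi with respect to the signed measure gamma (well defined whenever phi is
  |gamma|-integrable: it does not depend on the decomposition).\<close>
definition sint :: "'a measure \<Rightarrow> ('a set \<Rightarrow> real) \<Rightarrow> ('a \<Rightarrow> real) \<Rightarrow> real" where
  "sint M \<gamma> \<phi> = (THE r. \<exists>\<mu> \<nu>. signed_decomp M \<gamma> \<mu> \<nu> \<and> integrable \<mu> \<phi> \<and> integrable \<nu> \<phi> \<and>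
                         r = integral\<^sup>L \<mu> \<phi> - integral\<^sup>L \<nu> \<phi>)"

definition is_prob :: "'a measure \<Rightarrow> ('a set \<Rightarrow> real) \<Rightarrow> bool" where
  "is_prob M \<gamma> \<longleftrightarrow> (\<forall>A. 0 \<le> \<gamma> A) \<and> \<gamma> (space M) = 1"

text \<open>Time index: finite type 't with CARD('t) = T+1; coordinates: finite type 'd.
  A point of Omega is x :: real^'d^'t with x$t \<in> K_t, and K_t = prod_j K_t^j.\<close>

definition Kt :: "('t \<Rightarrow> 'd::finite \<Rightarrow> real set) \<Rightarrow> 't \<Rightarrow> (real^'d) set" where
  "Kt KK t = {v. \<forall>j. v$j \<in> KK t j}"

definition Omega :: "('t::finite \<Rightarrow> 'd::finite \<Rightarrow> real set) \<Rightarrow> (real^'d^'t) set" where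
  "Omega KK = {x. \<forall>t. x$t \<in> Kt KK t}"

definition MK :: "('t \<Rightarrow> 'd::finite \<Rightarrow> real set) \<Rightarrow> 't \<Rightarrow> (real^'d) measure" where
  "MK KK t = restrict_space borel (Kt KK t)"

definition MOm :: "('t::finite \<Rightarrow> 'd::finite \<Rightarrow> real set) \<Rightarrow> (real^'d^'t) measure" where
  "MOm KK = restrict_space borel (Omega KK)"

definition Ct :: "('t \<Rightarrow> 'd::finite \<Rightarrow> real set) \<Rightarrow> 't \<Rightarrow> (real^'d \<Rightarrow> real) set" where
  "Ct KK t = {\<phi>. continuous_on (Kt KK t) \<phi> \<and>
      (\<exists>c. \<forall>v\<in>Kt KK t. \<bar>\<phi> v\<bar> \<le> c * (1 + (\<Sum>j\<in>UNIV. \<bar>v$j\<bar>)))}"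

definition C0T :: "('t::finite \<Rightarrow> 'd::finite \<Rightarrow> real set) \<Rightarrow> (real^'d^'t \<Rightarrow> real) set" where
  "C0T KK = {\<phi>. continuous_on (Omega KK) \<phi> \<and>
      (\<exists>c. \<forall>x\<in>Omega KK. \<bar>\<phi> x\<bar> \<le> c * (1 + (\<Sum>t\<in>UNIV. \<Sum>j\<in>UNIV. \<bar>x$t$j\<bar>)))}"

abbreviation caK where "caK KK t \<equiv> ca1 (MK KK t) (Ct KK t)"
abbreviation caOm where "caOm KK \<equiv> ca1 (MOm KK) (C0T KK)"

definition marg :: "('t::finite \<Rightarrow> 'd::finite \<Rightarrow> real set) \<Rightarrow> 't \<Rightarrow> ((real^'d^'t) set \<Rightarrow> real)
                     \<Rightarrow> (real^'d) set \<Rightarrow> real" where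
  "marg KK t \<gamma> = (\<lambda>B. if B \<in> sets (MK KK t) then \<gamma> ((\<lambda>x. x$t) -` B \<inter> Omega KK) else 0)"

definition weak_top :: "'a measure \<Rightarrow> ('a set \<Rightarrow> real) set \<Rightarrow> ('a \<Rightarrow> real) set
                        \<Rightarrow> ('a set \<Rightarrow> real) topology" where
  "weak_top M C G = topology_generated_by
      {{\<gamma>\<in>C. sint M \<gamma> \<phi> \<in> U} | \<phi> U. \<phi> \<in> G \<and> open U}"

definition lsc_on :: "'b topology \<Rightarrow> ('b \<Rightarrow> ereal) \<Rightarrow> bool" where
  "lsc_on X f \<longleftrightarrow> (\<forall>a. closedin X {x \<in> topspace X. f x \<le> a})"

text \<open>The test functions generating sigma(ca1(Omega), E): x \<mapsto> phi_t(x_t), phi_t \<in> E_t.\<close>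
definition testE :: "('t \<Rightarrow> (real^'d \<Rightarrow> real) set) \<Rightarrow> (real^'d^'t \<Rightarrow> real) set" where
  "testE E = {(\<lambda>x. \<phi> (x$t)) | t \<phi>. \<phi> \<in> E t}"

definition proper_convex_on :: "('b set \<Rightarrow> real) set \<Rightarrow> (('b set \<Rightarrow> real) \<Rightarrow> ereal) \<Rightarrow> bool" where
  "proper_convex_on C D \<longleftrightarrow> (\<forall>\<gamma>\<in>C. D \<gamma> \<noteq> -\<infinity>) \<and> (\<exists>\<gamma>\<in>C. D \<gamma> < \<infinity>) \<and>
     (\<forall>\<gamma>1\<in>C. \<forall>\<gamma>2\<in>C. \<forall>l::real. 0 \<le> l \<and> l \<le> 1 \<longrightarrow>
        D (\<lambda>A. l * \<gamma>1 A + (1 - l) * \<gamma>2 A) \<le> ereal l * D \<gamma>1 + ereal (1 - l) * D \<gamma>2)"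

definition Dtot :: "('t::finite \<Rightarrow> 'd::finite \<Rightarrow> real set) \<Rightarrow> ('t \<Rightarrow> ((real^'d) set \<Rightarrow> real) \<Rightarrow> ereal)
                     \<Rightarrow> ((real^'d^'t) set \<Rightarrow> real) \<Rightarrow> ereal" where
  "Dtot KK D \<gamma> = (\<Sum>t\<in>UNIV. D t (marg KK t \<gamma>))"

definition VV :: "('t::finite \<Rightarrow> 'd::finite \<Rightarrow> real set) \<Rightarrow> ('t \<Rightarrow> ((real^'d) set \<Rightarrow> real) \<Rightarrow> ereal)
                   \<Rightarrow> ('t \<Rightarrow> real^'d \<Rightarrow> real) \<Rightarrow> ereal" where
  "VV KK D \<phi> = (SUP \<gamma>\<in>caOm KK. ereal (sint (MOm KK) \<gamma> (\<lambda>x. \<Sum>t\<in>UNIV. \<phi> t (x$t))) - Dtot KK D \<gamma>)"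

definition Vt :: "('t \<Rightarrow> 'd::finite \<Rightarrow> real set) \<Rightarrow> ('t \<Rightarrow> ((real^'d) set \<Rightarrow> real) \<Rightarrow> ereal)
                   \<Rightarrow> 't \<Rightarrow> (real^'d \<Rightarrow> real) \<Rightarrow> ereal" where
  "Vt KK D t \<psi> = (SUP \<gamma>\<in>caK KK t. ereal (sint (MK KK t) \<gamma> \<psi>) - D t \<gamma>)"

definition UU where "UU KK D \<phi> = - VV KK D (\<lambda>t v. - \<phi> t v)"

definition Ut where "Ut KK D t \<psi> = - Vt KK D t (\<lambda>v. - \<psi> v)"

definition SU :: "('t::finite \<Rightarrow> 'd::finite \<Rightarrow> real set) \<Rightarrow> ('t \<Rightarrow> ((real^'d) set \<Rightarrow> real) \<Rightarrow> ereal)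
                   \<Rightarrow> ('t \<Rightarrow> real^'d \<Rightarrow> real) \<Rightarrow> ereal" where
  "SU KK D \<phi> = (SUP \<beta>\<in>(UNIV::(real^'t) set).
                  UU KK D (\<lambda>t v. \<phi> t v + \<beta>$t) - ereal (\<Sum>t\<in>UNIV. \<beta>$t))"

definition SUt :: "('t \<Rightarrow> 'd::finite \<Rightarrow> real set) \<Rightarrow> ('t \<Rightarrow> ((real^'d) set \<Rightarrow> real) \<Rightarrow> ereal)
                   \<Rightarrow> 't \<Rightarrow> (real^'d \<Rightarrow> real) \<Rightarrow> ereal" where
  "SUt KK D t \<psi> = (SUP \<alpha>\<in>(UNIV::real set). Ut KK D t (\<lambda>v. \<psi> v + \<alpha>) - ereal \<alpha>)"

end

theory Submission
  imports Defs
begin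

lemma nn_decomp_eq:
  fixes \<mu>1 \<mu>2 \<nu>1 \<nu>2 :: "'a measure"
  assumes s: "sets \<nu>1 = sets \<mu>1" "sets \<mu>2 = sets \<mu>1" "sets \<nu>2 = sets \<mu>1"
    and fin: "finite_measure \<mu>1" "finite_measure \<mu>2" "finite_measure \<nu>1" "finite_measure \<nu>2"
    and eq: "\<And>A. A \<in> sets \<mu>1 \<Longrightarrow> measure \<mu>1 A - measure \<nu>1 A = measure \<mu>2 A - measure \<nu>2 A"
    and f: "f \<in> borel_measurable \<mu>1"
  shows "(\<integral>\<^sup>+x. f x \<partial>\<mu>1) + (\<integral>\<^sup>+x. f x \<partial>\<nu>2) = (\<integral>\<^sup>+x. f x \<partial>\<mu>2) + (\<integral>\<^sup>+x. f x \<partial>\<nu>1)"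
  using f
proof (induction rule: borel_measurable_induct)
  case (cong f g)
  have sp: "space \<nu>1 = space \<mu>1" "space \<mu>2 = space \<mu>1" "space \<nu>2 = space \<mu>1"
    using s sets_eq_imp_space_eq by blast+
  have "\<And>N. space N = space \<mu>1 \<Longrightarrow> (\<integral>\<^sup>+x. f x \<partial>N) = (\<integral>\<^sup>+x. g x \<partial>N)"
    by (rule nn_integral_cong) (use cong in auto)
  then show ?case using cong sp by simp
next
  case (set A)
  have e: "emeasure \<mu>1 A + emeasure \<nu>2 A = emeasure \<mu>2 A + emeasure \<nu>1 A"
  proof -
    have "measure \<mu>1 A + measure \<nu>2 A = measure \<mu>2 A + measure \<nu>1 A" using eq[OF set] by simp
    then show ?thesis using fin
      by (simp add: finite_measure.emeasure_eq_measure ennreal_plus[symmetric] del: ennreal_plus)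
  qed
  show ?case using set s e by (simp)
next
  case (mult u c)
  have m: "\<And>N. sets N = sets \<mu>1 \<Longrightarrow> u \<in> borel_measurable N"
    using mult measurable_cong_sets by blast
  have "(\<integral>\<^sup>+x. c * u x \<partial>\<mu>1) + (\<integral>\<^sup>+x. c * u x \<partial>\<nu>2) = c * ((\<integral>\<^sup>+x. u x \<partial>\<mu>1) + (\<integral>\<^sup>+x. u x \<partial>\<nu>2))"
    using m s by (simp add: nn_integral_cmult distrib_left)
  also have "\<dots> = c * ((\<integral>\<^sup>+x. u x \<partial>\<mu>2) + (\<integral>\<^sup>+x. u x \<partial>\<nu>1))" using mult by simp
  also have "\<dots> = (\<integral>\<^sup>+x. c * u x \<partial>\<mu>2) + (\<integral>\<^sup>+x. c * u x \<partial>\<nu>1)"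
    using m s by (simp add: nn_integral_cmult distrib_left)
  finally show ?case .
next
  case (add u v)
  have m: "\<And>N. sets N = sets \<mu>1 \<Longrightarrow> u \<in> borel_measurable N \<and> v \<in> borel_measurable N"
    using add measurable_cong_sets by blast
  have "\<And>N. sets N = sets \<mu>1 \<Longrightarrow> (\<integral>\<^sup>+x. v x + u x \<partial>N) = (\<integral>\<^sup>+x. v x \<partial>N) + (\<integral>\<^sup>+x. u x \<partial>N)"
    using m by (simp add: nn_integral_add)
  then show ?case using add s by (simp add: ac_simps)
next
  case (seq U)
  have m: "\<And>N i. sets N = sets \<mu>1 \<Longrightarrow> U i \<in> borel_measurable N"
    using seq measurable_cong_sets by blast
  have I: "\<And>N. sets N = sets \<mu>1 \<Longrightarrow> (\<integral>\<^sup>+x. (SUP i. U i) x \<partial>N) = (SUP i. \<integral>\<^sup>+x. U i x \<partial>N)"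
  proof -
    fix N assume "sets N = sets \<mu>1"
    then have "(\<integral>\<^sup>+x. (SUP i. U i x) \<partial>N) = (SUP i. \<integral>\<^sup>+x. U i x \<partial>N)"
      using m \<open>incseq U\<close> by (intro nn_integral_monotone_convergence_SUP) auto
    then show "(\<integral>\<^sup>+x. (SUP i. U i) x \<partial>N) = (SUP i. \<integral>\<^sup>+x. U i x \<partial>N)" by (simp add: image_comp)
  qed
  have inc: "\<And>N. incseq (\<lambda>i. \<integral>\<^sup>+x. U i x \<partial>N)"
    using \<open>incseq U\<close> by (auto simp: incseq_def le_fun_def intro!: nn_integral_mono)
  have "(SUP i. \<integral>\<^sup>+x. U i x \<partial>\<mu>1) + (SUP i. \<integral>\<^sup>+x. U i x \<partial>\<nu>2)
      = (SUP i. (\<integral>\<^sup>+x. U i x \<partial>\<mu>1) + (\<integral>\<^sup>+x. U i x \<partial>\<nu>2))"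
    using inc by (simp add: ennreal_SUP_add)
  also have "\<dots> = (SUP i. (\<integral>\<^sup>+x. U i x \<partial>\<mu>2) + (\<integral>\<^sup>+x. U i x \<partial>\<nu>1))" using seq by simp
  also have "\<dots> = (SUP i. \<integral>\<^sup>+x. U i x \<partial>\<mu>2) + (SUP i. \<integral>\<^sup>+x. U i x \<partial>\<nu>1)"
    using inc by (simp add: ennreal_SUP_add)
  finally show ?case using I s by simp
qed

lemma int_decomp_eq:
  fixes \<mu>1 \<mu>2 \<nu>1 \<nu>2 :: "'a measure"
  assumes s: "sets \<nu>1 = sets \<mu>1" "sets \<mu>2 = sets \<mu>1" "sets \<nu>2 = sets \<mu>1"
    and fin: "finite_measure \<mu>1" "finite_measure \<mu>2" "finite_measure \<nu>1" "finite_measure \<nu>2"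
    and eq: "\<And>A. A \<in> sets \<mu>1 \<Longrightarrow> measure \<mu>1 A - measure \<nu>1 A = measure \<mu>2 A - measure \<nu>2 A"
    and i: "integrable \<mu>1 (f::'a \<Rightarrow> real)" "integrable \<mu>2 f" "integrable \<nu>1 f" "integrable \<nu>2 f"
  shows "integral\<^sup>L \<mu>1 f - integral\<^sup>L \<nu>1 f = integral\<^sup>L \<mu>2 f - integral\<^sup>L \<nu>2 f"
proof -
  have fm: "f \<in> borel_measurable \<mu>1" using i by auto
  have P: "(\<integral>\<^sup>+x. ennreal (f x) \<partial>\<mu>1) + (\<integral>\<^sup>+x. ennreal (f x) \<partial>\<nu>2) = (\<integral>\<^sup>+x. ennreal (f x) \<partial>\<mu>2) + (\<integral>\<^sup>+x. ennreal (f x) \<partial>\<nu>1)"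
    by (rule nn_decomp_eq[OF s fin eq]) (use fm in auto)
  have Q: "(\<integral>\<^sup>+x. ennreal (- f x) \<partial>\<mu>1) + (\<integral>\<^sup>+x. ennreal (- f x) \<partial>\<nu>2) = (\<integral>\<^sup>+x. ennreal (- f x) \<partial>\<mu>2) + (\<integral>\<^sup>+x. ennreal (- f x) \<partial>\<nu>1)"
    by (rule nn_decomp_eq[OF s fin eq]) (use fm in auto)
  have fin1: "\<And>N. integrable N f \<Longrightarrow> (\<integral>\<^sup>+x. ennreal (f x) \<partial>N) < top \<and> (\<integral>\<^sup>+x. ennreal (- f x) \<partial>N) < top"
    by (auto simp: real_integrable_def top.not_eq_extremum)
  have P': "enn2real (\<integral>\<^sup>+x. ennreal (f x) \<partial>\<mu>1) + enn2real (\<integral>\<^sup>+x. ennreal (f x) \<partial>\<nu>2) = enn2real (\<integral>\<^sup>+x. ennreal (f x) \<partial>\<mu>2) + enn2real (\<integral>\<^sup>+x. ennreal (f x) \<partial>\<nu>1)"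
    using arg_cong[OF P, of enn2real] fin1 i by (simp add: enn2real_plus)
  have Q': "enn2real (\<integral>\<^sup>+x. ennreal (- f x) \<partial>\<mu>1) + enn2real (\<integral>\<^sup>+x. ennreal (- f x) \<partial>\<nu>2) = enn2real (\<integral>\<^sup>+x. ennreal (- f x) \<partial>\<mu>2) + enn2real (\<integral>\<^sup>+x. ennreal (- f x) \<partial>\<nu>1)"
    using arg_cong[OF Q, of enn2real] fin1 i by (simp add: enn2real_plus)
  show ?thesis using P' Q' i by (simp add: real_lebesgue_integral_def)
qed

lemma sint_eq:
  assumes d: "signed_decomp M \<gamma> \<mu> \<nu>" and i: "integrable \<mu> \<phi>" "integrable \<nu> \<phi>"
  shows "sint M \<gamma> \<phi> = integral\<^sup>L \<mu> \<phi> - integral\<^sup>L \<nu> \<phi>"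
  unfolding sint_def
proof (rule the_equality)
  show "\<exists>\<mu>' \<nu>'. signed_decomp M \<gamma> \<mu>' \<nu>' \<and> integrable \<mu>' \<phi> \<and> integrable \<nu>' \<phi> \<and>
      integral\<^sup>L \<mu> \<phi> - integral\<^sup>L \<nu> \<phi> = integral\<^sup>L \<mu>' \<phi> - integral\<^sup>L \<nu>' \<phi>"
    using d i by blast
next
  fix r assume "\<exists>\<mu>' \<nu>'. signed_decomp M \<gamma> \<mu>' \<nu>' \<and> integrable \<mu>' \<phi> \<and> integrable \<nu>' \<phi> \<and>
      r = integral\<^sup>L \<mu>' \<phi> - integral\<^sup>L \<nu>' \<phi>"
  then obtain \<mu>' \<nu>' where d': "signed_decomp M \<gamma> \<mu>' \<nu>'" and i': "integrable \<mu>' \<phi>" "integrable \<nu>' \<phi>"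
    and r: "r = integral\<^sup>L \<mu>' \<phi> - integral\<^sup>L \<nu>' \<phi>" by blast
  have "integral\<^sup>L \<mu>' \<phi> - integral\<^sup>L \<nu>' \<phi> = integral\<^sup>L \<mu> \<phi> - integral\<^sup>L \<nu> \<phi>"
  proof (rule int_decomp_eq)
    show "measure \<mu>' A - measure \<nu>' A = measure \<mu> A - measure \<nu> A" for A
      using d d' unfolding signed_decomp_def by metis
  qed (use d d' i i' in \<open>auto simp: signed_decomp_def\<close>)
  then show "r = integral\<^sup>L \<mu> \<phi> - integral\<^sup>L \<nu> \<phi>" using r by simp
qed

lemma cont_vec_nth: "continuous_on S (\<lambda>x::real^'d^'t. x $ t)"
  by (intro linear_continuous_on bounded_linear_vec_nth)

lemma space_MOm[simp]: "space (MOm KK) = Omega KK"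
  by (simp add: MOm_def space_restrict_space)

lemma space_MK[simp]: "space (MK KK t) = Kt KK t"
  by (simp add: MK_def space_restrict_space)

lemma Omega_proj: "x \<in> Omega KK \<Longrightarrow> x $ t \<in> Kt KK t"
  by (simp add: Omega_def)

lemma meas_proj: "(\<lambda>x. x $ t) \<in> measurable (MOm KK) (MK KK t)"
  unfolding MOm_def MK_def
  apply (rule measurable_restrict_space2)
   apply (simp add: space_restrict_space Omega_def)
  apply (rule measurable_restrict_space1)
  apply (rule borel_measurable_continuous_onI)
  apply (rule cont_vec_nth)
  done

lemma comp_C0T:
  assumes "\<psi> \<in> Ct KK t" shows "(\<lambda>x. \<psi> (x $ t)) \<in> C0T KK"
proof -
  from assms obtain c where cont: "continuous_on (Kt KK t) \<psi>"
    and c: "\<forall>v\<in>Kt KK t. \<bar>\<psi> v\<bar> \<le> c * (1 + (\<Sum>j\<in>UNIV. \<bar>v$j\<bar>))"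
    unfolding Ct_def by blast
  have "continuous_on (Omega KK) (\<lambda>x. \<psi> (x $ t))"
    by (rule continuous_on_compose2[OF cont cont_vec_nth]) (auto simp: Omega_def)
  moreover have "\<forall>x\<in>Omega KK. \<bar>\<psi> (x$t)\<bar> \<le> max c 0 * (1 + (\<Sum>s\<in>UNIV. \<Sum>j\<in>UNIV. \<bar>x$s$j\<bar>))"
  proof
    fix x assume x: "x \<in> Omega KK"
    have "\<bar>\<psi> (x$t)\<bar> \<le> c * (1 + (\<Sum>j\<in>UNIV. \<bar>x$t$j\<bar>))" using c Omega_proj[OF x] by blast
    also have "\<dots> \<le> max c 0 * (1 + (\<Sum>j\<in>UNIV. \<bar>x$t$j\<bar>))"
      by (intro mult_right_mono) (auto intro: add_nonneg_nonneg sum_nonneg)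
    also have "\<dots> \<le> max c 0 * (1 + (\<Sum>s\<in>UNIV. \<Sum>j\<in>UNIV. \<bar>x$s$j\<bar>))"
      by (intro mult_left_mono add_left_mono member_le_sum[where f="\<lambda>s. \<Sum>j\<in>UNIV. \<bar>x$s$j\<bar>"])
         (auto intro: sum_nonneg)
    finally show "\<bar>\<psi> (x$t)\<bar> \<le> max c 0 * (1 + (\<Sum>s\<in>UNIV. \<Sum>j\<in>UNIV. \<bar>x$s$j\<bar>))" .
  qed
  ultimately show ?thesis unfolding C0T_def by blast
qed

lemma Ct_meas: "\<psi> \<in> Ct KK t \<Longrightarrow> \<psi> \<in> borel_measurable (MK KK t)"
  unfolding Ct_def MK_def by (auto intro: borel_measurable_continuous_on_restrict)

lemma C0T_meas: "\<psi> \<in> C0T KK \<Longrightarrow> \<psi> \<in> borel_measurable (MOm KK)"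
  unfolding C0T_def MOm_def by (auto intro: borel_measurable_continuous_on_restrict)

lemma marg_decomp:
  assumes d: "signed_decomp (MOm KK) \<gamma> \<mu> \<nu>"
  shows "signed_decomp (MK KK t) (marg KK t \<gamma>) (distr \<mu> (MK KK t) (\<lambda>x. x $ t)) (distr \<nu> (MK KK t) (\<lambda>x. x $ t))"
proof -
  have s: "sets \<mu> = sets (MOm KK)" "sets \<nu> = sets (MOm KK)" "finite_measure \<mu>" "finite_measure \<nu>"
    and g: "\<gamma> = (\<lambda>A. measure \<mu> A - measure \<nu> A)" using d by (auto simp: signed_decomp_def)
  have sp: "space \<mu> = Omega KK" "space \<nu> = Omega KK"
    using s(1,2) sets_eq_imp_space_eq space_MOm by metis+
  have m: "(\<lambda>x. x $ t) \<in> measurable \<mu> (MK KK t)" "(\<lambda>x. x $ t) \<in> measurable \<nu> (MK KK t)"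
    using meas_proj s(1,2) measurable_cong_sets by blast+
  have "marg KK t \<gamma> = (\<lambda>B. measure (distr \<mu> (MK KK t) (\<lambda>x. x $ t)) B - measure (distr \<nu> (MK KK t) (\<lambda>x. x $ t)) B)"
  proof
    fix B
    show "marg KK t \<gamma> B = measure (distr \<mu> (MK KK t) (\<lambda>x. x $ t)) B - measure (distr \<nu> (MK KK t) (\<lambda>x. x $ t)) B"
    proof (cases "B \<in> sets (MK KK t)")
      case True
      then show ?thesis using m sp by (simp add: marg_def g measure_distr Int_commute)
    next
      case False
      then show ?thesis by (simp add: marg_def measure_notin_sets)
    qed
  qed
  then show ?thesis unfolding signed_decomp_def
    using s by (auto intro: finite_measure.finite_measure_distr m)
qed

lemma marg_ca:
  assumes g: "\<gamma> \<in> caOm KK"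
  shows "marg KK t \<gamma> \<in> caK KK t"
    and "\<And>\<psi>. \<psi> \<in> Ct KK t \<Longrightarrow> sint (MK KK t) (marg KK t \<gamma>) \<psi> = sint (MOm KK) \<gamma> (\<lambda>x. \<psi> (x $ t))"
proof -
  obtain \<mu> \<nu> where d: "signed_decomp (MOm KK) \<gamma> \<mu> \<nu>" and i: "\<forall>\<phi>\<in>C0T KK. integrable \<mu> \<phi> \<and> integrable \<nu> \<phi>"
    using g unfolding ca1_def by blast
  have s: "sets \<mu> = sets (MOm KK)" "sets \<nu> = sets (MOm KK)" using d by (auto simp: signed_decomp_def)
  have m: "(\<lambda>x. x $ t) \<in> measurable \<mu> (MK KK t)" "(\<lambda>x. x $ t) \<in> measurable \<nu> (MK KK t)"
    using meas_proj s(1,2) measurable_cong_sets by blast+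
  have ii: "integrable (distr \<mu> (MK KK t) (\<lambda>x. x $ t)) \<psi> \<and> integrable (distr \<nu> (MK KK t) (\<lambda>x. x $ t)) \<psi>"
    if "\<psi> \<in> Ct KK t" for \<psi>
    using i comp_C0T[OF that] Ct_meas[OF that] m by (simp add: integrable_distr_eq)
  show "marg KK t \<gamma> \<in> caK KK t"
    unfolding ca1_def using marg_decomp[OF d, of t] ii by blast
  fix \<psi> assume p: "\<psi> \<in> Ct KK t"
  have "sint (MK KK t) (marg KK t \<gamma>) \<psi> = integral\<^sup>L (distr \<mu> (MK KK t) (\<lambda>x. x $ t)) \<psi> - integral\<^sup>L (distr \<nu> (MK KK t) (\<lambda>x. x $ t)) \<psi>"
    using sint_eq[OF marg_decomp[OF d, of t]] ii[OF p] by blast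
  also have "\<dots> = integral\<^sup>L \<mu> (\<lambda>x. \<psi> (x $ t)) - integral\<^sup>L \<nu> (\<lambda>x. \<psi> (x $ t))"
    using m Ct_meas[OF p] by (simp add: integral_distr)
  also have "\<dots> = sint (MOm KK) \<gamma> (\<lambda>x. \<psi> (x $ t))"
    using sint_eq[OF d] i comp_C0T[OF p] by simp
  finally show "sint (MK KK t) (marg KK t \<gamma>) \<psi> = sint (MOm KK) \<gamma> (\<lambda>x. \<psi> (x $ t))" .
qed


lemma ereal_split_lt:
  fixes f g a :: ereal
  assumes "f \<noteq> -\<infinity>" "g \<noteq> -\<infinity>" "a < f + g"
  shows "\<exists>r::real. ereal r < f \<and> a - ereal r < g"
proof (cases a)
  case PInf then show ?thesis using assms by simp
next
  case MInf
  obtain r where "ereal r < f" using ereal_dense2[of "-\<infinity>" f] assms(1) by auto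
  then show ?thesis using MInf assms by (intro exI[of _ r]) auto
next
  case (real z)
  show ?thesis
  proof (cases g)
    case PInf
    obtain r where "ereal r < f" using ereal_dense2[of "-\<infinity>" f] assms(1) by auto
    then show ?thesis using PInf real by (intro exI[of _ r]) auto
  next
    case (real y)
    with \<open>a = ereal z\<close> assms have "ereal (z - y) < f" by (cases f) auto
    then obtain r where r: "ereal (z - y) < ereal r" "ereal r < f" using ereal_dense2 by blast
    then show ?thesis using real \<open>a = ereal z\<close> by (intro exI[of _ r]) auto
  qed (use assms in auto)
qed

lemma weak_top_space:
  assumes "G \<noteq> {}" shows "topspace (weak_top M C G) = C"
proof -
  obtain \<phi> where "\<phi> \<in> G" using assms by blast
  then have "{\<gamma>\<in>C. sint M \<gamma> \<phi> \<in> UNIV} \<in> {{\<gamma>\<in>C. sint M \<gamma> \<phi> \<in> U} | \<phi> U. \<phi> \<in> G \<and> open U}" by blast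
  then show ?thesis unfolding weak_top_def by auto
qed

lemma weak_preimage_open:
  assumes f: "\<And>\<gamma>. \<gamma> \<in> C1 \<Longrightarrow> f \<gamma> \<in> C2"
    and h: "\<And>\<phi>. \<phi> \<in> G2 \<Longrightarrow> \<exists>\<phi>'\<in>G1. \<forall>\<gamma>\<in>C1. sint M2 (f \<gamma>) \<phi> = sint M1 \<gamma> \<phi>'"
    and S: "openin (weak_top M2 C2 G2) S"
  shows "openin (weak_top M1 C1 G1) {\<gamma>\<in>C1. f \<gamma> \<in> S}"
proof -
  have "generate_topology_on {{\<gamma>\<in>C2. sint M2 \<gamma> \<phi> \<in> U} | \<phi> U. \<phi> \<in> G2 \<and> open U} S"
    using S unfolding weak_top_def openin_topology_generated_by_iff .
  then have "generate_topology_on {{\<gamma>\<in>C1. sint M1 \<gamma> \<phi> \<in> U} | \<phi> U. \<phi> \<in> G1 \<and> open U} {\<gamma>\<in>C1. f \<gamma> \<in> S}"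
  proof (induction rule: generate_topology_on.induct)
    case Empty
    have e: "{\<gamma>\<in>C1. f \<gamma> \<in> {}} = {}" by simp
    show ?case unfolding e by (rule generate_topology_on.Empty)
  next
    case (Int a b)
    have e: "{\<gamma>\<in>C1. f \<gamma> \<in> a \<inter> b} = {\<gamma>\<in>C1. f \<gamma> \<in> a} \<inter> {\<gamma>\<in>C1. f \<gamma> \<in> b}" by auto
    show ?case unfolding e by (rule generate_topology_on.Int[OF Int.IH(1) Int.IH(2)])
  next
    case (UN K)
    have e: "{\<gamma>\<in>C1. f \<gamma> \<in> \<Union>K} = \<Union>((\<lambda>k. {\<gamma>\<in>C1. f \<gamma> \<in> k}) ` K)" by auto
    show ?case unfolding e
    proof (rule generate_topology_on.UN)
      fix k assume "k \<in> (\<lambda>k. {\<gamma>\<in>C1. f \<gamma> \<in> k}) ` K"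
      then obtain k0 where k0: "k0 \<in> K" "k = {\<gamma>\<in>C1. f \<gamma> \<in> k0}" by blast
      show "generate_topology_on {{\<gamma>\<in>C1. sint M1 \<gamma> \<phi> \<in> U} | \<phi> U. \<phi> \<in> G1 \<and> open U} k"
        unfolding k0(2) by (rule UN.IH[OF k0(1)])
    qed
  next
    case (Basis s)
    then obtain \<phi> U where s: "s = {\<gamma>\<in>C2. sint M2 \<gamma> \<phi> \<in> U}" "\<phi> \<in> G2" "open U" by blast
    obtain \<phi>' where p: "\<phi>' \<in> G1" "\<forall>\<gamma>\<in>C1. sint M2 (f \<gamma>) \<phi> = sint M1 \<gamma> \<phi>'" using h[OF s(2)] by blast
    have e: "{\<gamma>\<in>C1. f \<gamma> \<in> s} = {\<gamma>\<in>C1. sint M1 \<gamma> \<phi>' \<in> U}" using s p f by auto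
    show ?case unfolding e
    proof (rule generate_topology_on.Basis)
      show "{\<gamma>\<in>C1. sint M1 \<gamma> \<phi>' \<in> U} \<in> {{\<gamma>\<in>C1. sint M1 \<gamma> \<phi> \<in> U} | \<phi> U. \<phi> \<in> G1 \<and> open U}"
        using p(1) s(3) by blast
    qed
  qed
  then show ?thesis unfolding weak_top_def openin_topology_generated_by_iff .
qed

lemma lsc_comp:
  assumes f: "\<And>\<gamma>. \<gamma> \<in> C1 \<Longrightarrow> f \<gamma> \<in> C2"
    and h: "\<And>\<phi>. \<phi> \<in> G2 \<Longrightarrow> \<exists>\<phi>'\<in>G1. \<forall>\<gamma>\<in>C1. sint M2 (f \<gamma>) \<phi> = sint M1 \<gamma> \<phi>'"
    and G: "G1 \<noteq> {}" "G2 \<noteq> {}"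
    and D: "lsc_on (weak_top M2 C2 G2) D"
  shows "lsc_on (weak_top M1 C1 G1) (\<lambda>\<gamma>. D (f \<gamma>))"
  unfolding lsc_on_def
proof
  fix a
  have "closedin (weak_top M2 C2 G2) {x \<in> C2. D x \<le> a}"
    using D weak_top_space[OF G(2)] unfolding lsc_on_def by metis
  then have o: "openin (weak_top M2 C2 G2) (C2 - {x \<in> C2. D x \<le> a})"
    using weak_top_space[OF G(2)] by (metis closedin_def)
  have "openin (weak_top M1 C1 G1) {\<gamma>\<in>C1. f \<gamma> \<in> C2 - {x \<in> C2. D x \<le> a}}"
    by (rule weak_preimage_open[OF f h o])
  moreover have "{\<gamma>\<in>C1. f \<gamma> \<in> C2 - {x \<in> C2. D x \<le> a}} = C1 - {x \<in> C1. D (f x) \<le> a}"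
    using f by auto
  ultimately show "closedin (weak_top M1 C1 G1) {x \<in> topspace (weak_top M1 C1 G1). D (f x) \<le> a}"
    using weak_top_space[OF G(1)] by (simp add: closedin_def)
qed

lemma lsc_open_gt:
  assumes "lsc_on X f" shows "openin X {x\<in>topspace X. a < f x}"
proof -
  have "closedin X {x\<in>topspace X. f x \<le> a}" using assms unfolding lsc_on_def by blast
  then have "openin X (topspace X - {x\<in>topspace X. f x \<le> a})" by (simp add: closedin_def)
  moreover have "topspace X - {x\<in>topspace X. f x \<le> a} = {x\<in>topspace X. a < f x}" by auto
  ultimately show ?thesis by simp
qed

lemma lsc_add:
  assumes f: "lsc_on X f" and g: "lsc_on X g" and nf: "\<And>x. x \<in> topspace X \<Longrightarrow> f x \<noteq> -\<infinity>" and ng: "\<And>x. x \<in> topspace X \<Longrightarrow> g x \<noteq> -\<infinity>"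
  shows "lsc_on X (\<lambda>x. f x + g x)"
  unfolding lsc_on_def
proof
  fix a
  have eq: "{x\<in>topspace X. a < f x + g x} = (\<Union>r. {x\<in>topspace X. ereal r < f x} \<inter> {x\<in>topspace X. a - ereal r < g x})"
  proof (intro equalityI subsetI)
    fix x assume "x \<in> {x\<in>topspace X. a < f x + g x}"
    then have x: "x \<in> topspace X" "a < f x + g x" by auto
    obtain r where "ereal r < f x" "a - ereal r < g x" using ereal_split_lt[OF nf[OF x(1)] ng[OF x(1)] x(2)] by blast
    then show "x \<in> (\<Union>r. {x\<in>topspace X. ereal r < f x} \<inter> {x\<in>topspace X. a - ereal r < g x})"
      using x(1) by blast
  next
    fix x assume "x \<in> (\<Union>r. {x\<in>topspace X. ereal r < f x} \<inter> {x\<in>topspace X. a - ereal r < g x})"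
    then obtain r where r: "x \<in> topspace X" "ereal r < f x" "a - ereal r < g x" by blast
    have "a < f x + g x"
      using r nf[OF r(1)] ng[OF r(1)]
      by (smt (verit) ab_left_minus add.commute add_diff_eq_ereal
    ereal_add_strict_mono2 ereal_eq_0(2) ereal_minus(1) nat_arith.rule0
    uminus_add_conv_diff)
    then show "x \<in> {x\<in>topspace X. a < f x + g x}" using r by blast
  qed
  have o: "openin X (\<Union>r. {x\<in>topspace X. ereal r < f x} \<inter> {x\<in>topspace X. a - ereal r < g x})"
  proof (rule openin_Union)
    have "\<And>r. openin X ({x\<in>topspace X. ereal r < f x} \<inter> {x\<in>topspace X. a - ereal r < g x})"
      using lsc_open_gt[OF f] lsc_open_gt[OF g] by (rule openin_Int)
    then show "\<And>S. S \<in> range (\<lambda>r. {x\<in>topspace X. ereal r < f x} \<inter> {x\<in>topspace X. a - ereal r < g x}) \<Longrightarrow> openin X S"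
      by blast
  qed
  have e2: "topspace X - {x\<in>topspace X. f x + g x \<le> a} = {x\<in>topspace X. a < f x + g x}"
    by auto
  have "openin X (topspace X - {x\<in>topspace X. f x + g x \<le> a})"
    unfolding trans[OF e2 eq] by (rule o)
  then show "closedin X {x\<in>topspace X. f x + g x \<le> a}" by (simp add: closedin_def)
qed

lemma closedin_const_le: "closedin X {x \<in> topspace X. (c::ereal) \<le> a}"
proof (cases "c \<le> a")
  case True
  then have e: "{x \<in> topspace X. c \<le> a} = topspace X" by auto
  show ?thesis unfolding e by (rule closedin_topspace)
next
  case False
  then have e: "{x \<in> topspace X. c \<le> a} = {}" by auto
  show ?thesis unfolding e by (rule closedin_empty)
qed

lemma lsc_const: "lsc_on X (\<lambda>x. (c::ereal))"
  unfolding lsc_on_def by (intro allI closedin_const_le)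

lemma sum_not_minf: "(\<And>t. t \<in> I \<Longrightarrow> f t \<noteq> (-\<infinity>::ereal)) \<Longrightarrow> sum f I \<noteq> -\<infinity>"
  by (induction I rule: infinite_finite_induct) auto

lemma lsc_sum:
  assumes "finite I" "\<And>t. t \<in> I \<Longrightarrow> lsc_on X (f t)" "\<And>t x. t \<in> I \<Longrightarrow> x \<in> topspace X \<Longrightarrow> f t x \<noteq> -\<infinity>"
  shows "lsc_on X (\<lambda>x. \<Sum>t\<in>I. f t x)"
  using assms
proof (induction I rule: finite_induct)
  case empty then show ?case by (simp add: lsc_const)
next
  case (insert s I)
  have "lsc_on X (\<lambda>x. f s x + (\<Sum>t\<in>I. f t x))"
  proof (rule lsc_add)
    show "lsc_on X (f s)" using insert.prems(1) by simp
    show "lsc_on X (\<lambda>x. \<Sum>t\<in>I. f t x)" using insert.IH insert.prems by simp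
    show "f s x \<noteq> -\<infinity>" if "x \<in> topspace X" for x using insert.prems(2) that by simp
    show "(\<Sum>t\<in>I. f t x) \<noteq> -\<infinity>" if "x \<in> topspace X" for x
      by (rule sum_not_minf) (use insert.prems(2) that in simp)
  qed
  then show ?case using insert.hyps by simp
qed



lemma sum_minf:
  fixes f :: "'t \<Rightarrow> ereal"
  assumes "finite I" "s \<in> I" "f s = -\<infinity>" "\<And>t. t \<in> I \<Longrightarrow> f t \<noteq> \<infinity>"
  shows "sum f I = -\<infinity>"
  using assms
proof (induction I rule: finite_induct)
  case empty then show ?case by simp
next
  case (insert a I)
  show ?case
  proof (cases "a = s")
    case True
    then have "sum f I \<noteq> \<infinity>" using insert by (simp add: sum_Pinfty)
    then show ?thesis using insert True by simp
  next
    case False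
    then have "sum f I = -\<infinity>" using insert by auto
    moreover have "f a \<noteq> \<infinity>" using insert by auto
    ultimately show ?thesis using insert by simp
  qed
qed

lemma sum_SUP_le:
  fixes f :: "'t \<Rightarrow> 'a \<Rightarrow> ereal"
  assumes "finite I"
    and ne: "\<And>t. t \<in> I \<Longrightarrow> \<exists>x\<in>A t. f t x \<noteq> -\<infinity>"
    and ni: "\<And>t x. t \<in> I \<Longrightarrow> x \<in> A t \<Longrightarrow> f t x \<noteq> \<infinity>"
    and h: "\<And>g. (\<And>t. t \<in> I \<Longrightarrow> g t \<in> A t) \<Longrightarrow> (\<Sum>t\<in>I. f t (g t)) \<le> c"
  shows "(\<Sum>t\<in>I. SUP x\<in>A t. f t x) \<le> c"
  using assms
proof (induction I arbitrary: c rule: finite_induct)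
  case empty
  then show ?case by fastforce
next
  case (insert s I)
  define B where "B = (\<Sum>t\<in>I. SUP x\<in>A t. f t x)"
  have step: "ereal r + B \<le> c" if x: "x \<in> A s" "f s x = ereal r" for x r
  proof -
    have "(\<Sum>t\<in>I. f t (g t)) \<le> c - ereal r" if g: "\<And>t. t \<in> I \<Longrightarrow> g t \<in> A t" for g
    proof -
      have "(\<Sum>t\<in>insert s I. f t ((g(s:=x)) t)) \<le> c"
      proof (rule insert.prems(3))
        fix t assume "t \<in> insert s I" then show "(g(s:=x)) t \<in> A t" using g x by auto
      qed
      also have "(\<Sum>t\<in>insert s I. f t ((g(s:=x)) t)) = f s x + (\<Sum>t\<in>I. f t (g t))"
      proof -
        have "(\<Sum>t\<in>I. f t ((g(s:=x)) t)) = (\<Sum>t\<in>I. f t (g t))"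
          using insert.hyps by (intro sum.cong) auto
        then show ?thesis using insert.hyps by simp
      qed
      finally show ?thesis using x by (simp add: ereal_le_minus add.commute)
    qed
    then have "B \<le> c - ereal r" unfolding B_def
      using insert.IH[of "c - ereal r"] insert.prems by blast
    then show ?thesis by (simp add: ereal_le_minus add.commute)
  qed
  obtain x0 where x0: "x0 \<in> A s" "f s x0 \<noteq> -\<infinity>" using insert.prems by blast
  obtain r0 where r0: "f s x0 = ereal r0" using x0 insert.prems(2)[of s x0] by (cases "f s x0") auto
  have Bn: "B \<noteq> -\<infinity>" unfolding B_def
  proof (rule sum_not_minf)
    fix t assume t: "t \<in> I"
    then obtain x where "x \<in> A t" "f t x \<noteq> -\<infinity>" using insert.prems by blast
    then have "f t x \<le> (SUP x\<in>A t. f t x)" "f t x \<noteq> -\<infinity>" by (auto intro: SUP_upper)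
    then show "(SUP x\<in>A t. f t x) \<noteq> -\<infinity>" by auto
  qed
  have "(SUP x\<in>A s. f s x) + B \<le> c"
  proof (cases B)
    case (real b)
    have "(SUP x\<in>A s. f s x) \<le> c - ereal b"
    proof (rule SUP_least)
      fix x assume x: "x \<in> A s"
      show "f s x \<le> c - ereal b"
      proof (cases "f s x")
        case (real r)
        then show ?thesis using step[OF x real] \<open>B = ereal b\<close> by (simp add: ereal_le_minus add.commute)
      next
        case PInf then show ?thesis using insert.prems(2)[of s x] x by simp
      next
        case MInf then show ?thesis by simp
      qed
    qed
    then show ?thesis using real by (simp add: ereal_le_minus)
  next
    case PInf
    then have "c = \<infinity>" using step[OF x0(1) r0] by simp
    then show ?thesis by simp
  next
    case MInf then show ?thesis using Bn by simp
  qed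
  then show ?case using insert.hyps by (simp add: B_def)
qed



lemma le_measureI: "space m = space \<mu> \<Longrightarrow> sets m = sets \<mu> \<Longrightarrow> (\<And>A. emeasure m A \<le> emeasure \<mu> A) \<Longrightarrow> m \<le> \<mu>"
  by (subst le_measure_iff) (auto simp: le_fun_def)

lemma prob_to_measure:
  assumes g: "\<gamma> \<in> ca1 N F" and p: "is_prob N \<gamma>"
  obtains m where "prob_space m" "sets m = sets N" "\<And>A. measure m A = \<gamma> A" "\<And>\<phi>. \<phi> \<in> F \<Longrightarrow> integrable m \<phi>"
proof -
  obtain \<mu> \<nu> where d: "signed_decomp N \<gamma> \<mu> \<nu>" and i: "\<forall>\<phi>\<in>F. integrable \<mu> \<phi> \<and> integrable \<nu> \<phi>"
    using g unfolding ca1_def by blast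
  have s: "sets \<mu> = sets N" "sets \<nu> = sets N" "finite_measure \<mu>" "finite_measure \<nu>"
    and gg: "\<gamma> = (\<lambda>A. measure \<mu> A - measure \<nu> A)" using d by (auto simp: signed_decomp_def)
  have sp: "space \<mu> = space N" "space \<nu> = space N" using sets_eq_imp_space_eq[OF s(1)] sets_eq_imp_space_eq[OF s(2)] by auto
  have nn: "\<And>A. 0 \<le> \<gamma> A" using p by (simp add: is_prob_def)
  define m where "m = measure_of (space N) (sets N) (\<lambda>A. ennreal (\<gamma> A))"
  have ca: "countably_additive (sets N) (\<lambda>A. ennreal (\<gamma> A))"
    unfolding countably_additive_def
  proof (intro allI impI)
    fix A :: "nat \<Rightarrow> _" assume A: "range A \<subseteq> sets N" "disjoint_family A" "\<Union> (range A) \<in> sets N"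
    have rA: "range A \<subseteq> sets \<mu>" "range A \<subseteq> sets \<nu>" using A(1) s(1,2) by simp_all
    have "(\<lambda>i. measure \<mu> (A i)) sums (measure \<mu> (\<Union>i. A i))"
      by (rule finite_measure.finite_measure_UNION[OF s(3) rA(1) A(2)])
    moreover have "(\<lambda>i. measure \<nu> (A i)) sums (measure \<nu> (\<Union>i. A i))"
      by (rule finite_measure.finite_measure_UNION[OF s(4) rA(2) A(2)])
    ultimately have "(\<lambda>i. \<gamma> (A i)) sums \<gamma> (\<Union>i. A i)" unfolding gg by (rule sums_diff)
    then have sm1: "summable (\<lambda>i. \<gamma> (A i))" and eq1: "(\<Sum>i. \<gamma> (A i)) = \<gamma> (\<Union>i. A i)"
      by (auto simp: sums_iff)
    have "(\<Sum>i. ennreal (\<gamma> (A i))) = ennreal (\<Sum>i. \<gamma> (A i))"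
      by (rule suminf_ennreal2[OF nn sm1])
    then show "(\<Sum>i. ennreal (\<gamma> (A i))) = ennreal (\<gamma> (\<Union> (range A)))"
      unfolding eq1 .
  qed
  have pos: "positive (sets N) (\<lambda>A. ennreal (\<gamma> A))" unfolding positive_def gg by simp
  have em: "\<And>A. A \<in> sets N \<Longrightarrow> emeasure m A = ennreal (\<gamma> A)"
    unfolding m_def by (rule emeasure_measure_of_sigma[OF sets.sigma_algebra_axioms pos ca])
  have sm: "sets m = sets N" unfolding m_def by simp
  have spm: "space m = space N" using sets_eq_imp_space_eq[OF sm] .
  have me: "measure m A = \<gamma> A" for A
  proof (cases "A \<in> sets N")
    case True then show ?thesis using em nn by (simp add: measure_def)
  next
    case False then show ?thesis using sm s by (simp add: gg measure_notin_sets)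
  qed
  have ps: "prob_space m"
    by (rule prob_spaceI) (use em spm p in \<open>simp add: is_prob_def\<close>)
  have le: "m \<le> \<mu>"
  proof -
    have "emeasure m A \<le> emeasure \<mu> A" for A
    proof (cases "A \<in> sets N")
      case True
      have "\<gamma> A \<le> measure \<mu> A" unfolding gg by simp
      then show ?thesis using em[OF True] True s finite_measure.emeasure_eq_measure[of \<mu>] by simp
    next
      case False then show ?thesis using sm by (simp add: emeasure_notin_sets)
    qed
    moreover have "space m = space \<mu>" "sets m = sets \<mu>" using sm s spm sp by auto
    ultimately show ?thesis by (intro le_measureI) auto
  qed
  have ii: "integrable m \<phi>" if "\<phi> \<in> F" for \<phi>
  proof -
    have iu: "integrable \<mu> \<phi>" using i that by blast
    have sms: "sets m = sets \<mu>" using sm s by simp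
    have meq: "borel_measurable m = borel_measurable \<mu>" by (rule measurable_cong_sets[OF sms refl])
    have "\<phi> \<in> borel_measurable m" unfolding meq by (rule borel_measurable_integrable[OF iu])
    moreover have "(\<integral>\<^sup>+x. norm (\<phi> x) \<partial>m) \<le> (\<integral>\<^sup>+x. norm (\<phi> x) \<partial>\<mu>)"
      using le sm s by (intro nn_integral_mono_measure) auto
    moreover have "(\<integral>\<^sup>+x. norm (\<phi> x) \<partial>\<mu>) < \<infinity>" using iu by (simp add: integrable_iff_bounded)
    ultimately show ?thesis by (simp add: integrable_iff_bounded)
  qed
  show ?thesis by (rule that[OF ps sm me ii])
qed



lemma vec_meas:
  fixes m :: "'t::finite \<Rightarrow> (real^'d::finite) measure"
  assumes sm: "\<And>t. sets (m t) = sets (MK KK t)"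
  shows "(\<lambda>f. vec_lambda f) \<in> measurable (PiM UNIV m) (MOm KK)"
  unfolding MOm_def
proof (rule measurable_restrict_space2)
  have sp: "space (m t) = Kt KK t" for t
    using sets_eq_imp_space_eq[OF sm[of t]] by simp
  show "(\<lambda>f. vec_lambda f) \<in> space (PiM UNIV m) \<rightarrow> Omega KK"
    by (auto simp: space_PiM sp Omega_def PiE_def)
  show "(\<lambda>f. vec_lambda f) \<in> borel_measurable (PiM UNIV m)"
  proof (subst borel_measurable_euclidean_space, intro ballI)
    fix b :: "real^'d^'t" assume "b \<in> Basis"
    then obtain t u where b: "b = axis t u" "u \<in> Basis" unfolding Basis_vec_def by blast
    have h: "(\<lambda>v::real^'d. v \<bullet> u) \<in> borel_measurable (m t)"
    proof -
      have "(\<lambda>v::real^'d. v \<bullet> u) \<in> borel_measurable (MK KK t)"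
        unfolding MK_def
        by (intro measurable_restrict_space1 borel_measurable_continuous_onI continuous_intros)
      then show ?thesis unfolding measurable_cong_sets[OF sm[of t] refl, of borel] .
    qed
    have "(\<lambda>f. f t \<bullet> u) \<in> borel_measurable (PiM UNIV m)"
      using measurable_compose[OF measurable_component_singleton[of t UNIV m] h] by simp
    then show "(\<lambda>f. vec_lambda f \<bullet> b) \<in> borel_measurable (PiM UNIV m)"
      unfolding b(1) inner_axis by simp
  qed
qed

lemma abs_coord_Ct: "(\<lambda>v::real^'d. \<bar>v $ j\<bar>) \<in> Ct KK t"
proof -
  have "continuous_on (Kt KK t) (\<lambda>v::real^'d. \<bar>v $ j\<bar>)"
    by (intro continuous_intros continuous_on_compose2[OF continuous_on_id cont_vec_nth])
  moreover have "\<forall>v\<in>Kt KK t. \<bar>\<bar>v $ j\<bar>\<bar> \<le> 1 * (1 + (\<Sum>i\<in>UNIV. \<bar>v$i\<bar>))"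
  proof
    fix v :: "real^'d"
    have "\<bar>v $ j\<bar> \<le> (\<Sum>i\<in>UNIV. \<bar>v$i\<bar>)" by (rule member_le_sum) auto
    then show "\<bar>\<bar>v $ j\<bar>\<bar> \<le> 1 * (1 + (\<Sum>i\<in>UNIV. \<bar>v$i\<bar>))" by simp
  qed
  ultimately show ?thesis unfolding Ct_def by blast
qed

lemma product_exists:
  fixes KK :: "'t::finite \<Rightarrow> 'd::finite \<Rightarrow> real set"
  assumes g: "\<And>t. g t \<in> caK KK t" and p: "\<And>t. is_prob (MK KK t) (g t)"
  shows "\<exists>P\<in>caOm KK. \<forall>t. marg KK t P = g t"
proof -
  have "\<exists>m. prob_space m \<and> sets m = sets (MK KK t) \<and> (\<forall>A. measure m A = g t A) \<and> (\<forall>\<phi>\<in>Ct KK t. integrable m \<phi>)" for t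
  proof (rule prob_to_measure[OF g[of t] p[of t]])
    fix m assume "prob_space m" "sets m = sets (MK KK t)" "\<And>A. measure m A = g t A" "\<And>\<phi>. \<phi> \<in> Ct KK t \<Longrightarrow> integrable m \<phi>"
    then show ?thesis by blast
  qed
  then obtain m where mp: "\<And>t. prob_space (m t)" and ms: "\<And>t. sets (m t) = sets (MK KK t)"
    and mm: "\<And>t A. measure (m t) A = g t A" and mi: "\<And>t \<phi>. \<phi> \<in> Ct KK t \<Longrightarrow> integrable (m t) \<phi>"
    by metis
  interpret PP: product_prob_space m UNIV
    by (simp add: product_prob_space_def product_prob_space_axioms_def product_sigma_finite_def
        prob_space_imp_sigma_finite mp)
  define Q where "Q = PiM UNIV m"
  have em: "(\<lambda>f. vec_lambda f) \<in> measurable Q (MOm KK)" unfolding Q_def by (rule vec_meas[OF ms])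
  define P where "P = distr Q (MOm KK) (\<lambda>f. vec_lambda f)"
  have Pprob: "prob_space P" unfolding P_def Q_def by (rule PP.prob_space_distr[OF em[unfolded Q_def]])
  have sP: "sets P = sets (MOm KK)" unfolding P_def by simp
  have spP: "space P = Omega KK" using sets_eq_imp_space_eq[OF sP] by simp
  have comp: "distr Q (m t) (\<lambda>f. f t) = m t" for t
    unfolding Q_def by (rule PP.PiM_component) simp
  have mcomp: "(\<lambda>f. f t) \<in> measurable Q (m t)" for t
    unfolding Q_def by (rule measurable_component_singleton) simp
  have icoord: "integrable Q (\<lambda>f. \<bar>f t $ j\<bar>)" for t j
  proof -
    have hm: "(\<lambda>v::real^'d. \<bar>v $ j\<bar>) \<in> borel_measurable (m t)"
      unfolding measurable_cong_sets[OF ms[of t] refl, of borel] by (rule Ct_meas[OF abs_coord_Ct])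
    have "integrable (m t) (\<lambda>v::real^'d. \<bar>v $ j\<bar>)" by (rule mi[OF abs_coord_Ct])
    then have "integrable (distr Q (m t) (\<lambda>f. f t)) (\<lambda>v::real^'d. \<bar>v $ j\<bar>)" unfolding comp .
    then show ?thesis using integrable_distr_eq[OF mcomp hm] by simp
  qed
  define P' where "P' = (\<lambda>A. measure P A - measure (null_measure (MOm KK)) A)"
  have dec: "signed_decomp (MOm KK) P' P (null_measure (MOm KK))"
    unfolding signed_decomp_def P'_def
  proof (intro conjI)
    show "finite_measure P" using Pprob by (rule prob_space.finite_measure)
    show "finite_measure (null_measure (MOm KK))" by (rule finite_measureI) simp
  qed (simp_all add: sP)
  have intP: "integrable P \<phi>" if ph: "\<phi> \<in> C0T KK" for \<phi>
  proof -
    obtain c where c: "\<forall>x\<in>Omega KK. \<bar>\<phi> x\<bar> \<le> c * (1 + (\<Sum>t\<in>UNIV. \<Sum>j\<in>UNIV. \<bar>x$t$j\<bar>))"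
      using ph unfolding C0T_def by blast
    have phm: "\<phi> \<in> borel_measurable (MOm KK)" by (rule C0T_meas[OF ph])
    have "integrable Q (\<lambda>f. max c 0 * (1 + (\<Sum>t\<in>UNIV. \<Sum>j\<in>UNIV. \<bar>f t $ j\<bar>)))"
    proof -
      have Qp: "prob_space Q" unfolding Q_def by (rule PP.P.prob_space_axioms)
      have i1: "integrable Q (\<lambda>f. 1::real)"
        by (rule finite_measure.integrable_const[OF prob_space.finite_measure[OF Qp]])
      have i2: "integrable Q (\<lambda>f. \<Sum>t\<in>UNIV. \<Sum>j\<in>UNIV. \<bar>f t $ j\<bar>)"
        using icoord by (intro Bochner_Integration.integrable_sum) auto
      have i3: "integrable Q (\<lambda>f. 1 + (\<Sum>t\<in>UNIV. \<Sum>j\<in>UNIV. \<bar>f t $ j\<bar>))" by (rule Bochner_Integration.integrable_add[OF i1 i2])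
      show ?thesis by (rule Bochner_Integration.integrable_mult_right[OF i3])
    qed
    moreover have "(\<lambda>f. \<phi> (vec_lambda f)) \<in> borel_measurable Q"
      by (rule measurable_compose[OF em phm])
    moreover have "AE f in Q. norm (\<phi> (vec_lambda f)) \<le> norm (max c 0 * (1 + (\<Sum>t\<in>UNIV. \<Sum>j\<in>UNIV. \<bar>f t $ j\<bar>)))"
    proof (rule AE_I2)
      fix f assume f: "f \<in> space Q"
      have x: "vec_lambda f \<in> Omega KK" using measurable_space[OF em f] by simp
      have nn: "0 \<le> (\<Sum>t\<in>UNIV. \<Sum>j\<in>UNIV. \<bar>f t $ j\<bar>)" by (intro sum_nonneg) auto
      have "\<bar>\<phi> (vec_lambda f)\<bar> \<le> c * (1 + (\<Sum>t\<in>UNIV. \<Sum>j\<in>UNIV. \<bar>f t $ j\<bar>))"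
        using c x by fastforce
      also have "\<dots> \<le> max c 0 * (1 + (\<Sum>t\<in>UNIV. \<Sum>j\<in>UNIV. \<bar>f t $ j\<bar>))"
        using nn by (intro mult_right_mono) auto
      finally show "norm (\<phi> (vec_lambda f)) \<le> norm (max c 0 * (1 + (\<Sum>t\<in>UNIV. \<Sum>j\<in>UNIV. \<bar>f t $ j\<bar>)))"
        using nn by simp
    qed
    ultimately have "integrable Q (\<lambda>f. \<phi> (vec_lambda f))" by (rule Bochner_Integration.integrable_bound)
    then show ?thesis unfolding P_def using integrable_distr_eq[OF em phm] by simp
  qed
  have P'ca: "P' \<in> caOm KK"
  proof -
    have "\<forall>\<phi>\<in>C0T KK. integrable P \<phi> \<and> integrable (null_measure (MOm KK)) \<phi>"
    proof (intro ballI conjI)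
      fix \<phi> assume ph: "\<phi> \<in> C0T KK"
      show "integrable P \<phi>" by (rule intP[OF ph])
      show "integrable (null_measure (MOm KK)) \<phi>"
        unfolding integrable_null_measure_iff by (rule C0T_meas[OF ph])
    qed
    then show ?thesis unfolding ca1_def using dec by blast
  qed
  have "marg KK t P' = g t" for t
  proof
    fix B
    show "marg KK t P' B = g t B"
    proof (cases "B \<in> sets (MK KK t)")
      case True
      have mp': "(\<lambda>x. x $ t) \<in> measurable P (MK KK t)"
        unfolding measurable_cong_sets[OF sP refl] by (rule meas_proj)
      have "marg KK t P' B = measure P ((\<lambda>x. x $ t) -` B \<inter> Omega KK)"
        using True by (simp add: marg_def P'_def)
      also have "\<dots> = measure (distr P (MK KK t) (\<lambda>x. x $ t)) B"
        using measure_distr[OF mp' True] spP by simp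
      also have "distr P (MK KK t) (\<lambda>x. x $ t) = distr Q (MK KK t) ((\<lambda>x. x $ t) \<circ> (\<lambda>f. vec_lambda f))"
        unfolding P_def by (rule distr_distr[OF meas_proj em])
      also have "\<dots> = distr Q (m t) (\<lambda>f. f t)"
        by (rule distr_cong) (simp_all add: ms)
      also have "\<dots> = m t" by (rule comp)
      finally show ?thesis using mm by simp
    next
      case False
      then have "measure (m t) B = 0" using ms by (simp add: measure_notin_sets)
      then show ?thesis using False mm by (simp add: marg_def)
    qed
  qed
  then show ?thesis using P'ca by blast
qed



lemma sint_sum:
  fixes KK :: "'t::finite \<Rightarrow> 'd::finite \<Rightarrow> real set"
  assumes g: "\<gamma> \<in> caOm KK" and psi: "\<And>t. \<psi> t \<in> Ct KK t"
  shows "sint (MOm KK) \<gamma> (\<lambda>x. \<Sum>t\<in>UNIV. \<psi> t (x$t)) = (\<Sum>t\<in>UNIV. sint (MK KK t) (marg KK t \<gamma>) (\<psi> t))"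
proof -
  obtain \<mu> \<nu> where d: "signed_decomp (MOm KK) \<gamma> \<mu> \<nu>" and i: "\<forall>\<phi>\<in>C0T KK. integrable \<mu> \<phi> \<and> integrable \<nu> \<phi>"
    using g unfolding ca1_def by blast
  have it: "integrable \<mu> (\<lambda>x. \<psi> t (x$t))" "integrable \<nu> (\<lambda>x. \<psi> t (x$t))" for t
    using i comp_C0T[OF psi[of t]] by blast+
  have "sint (MOm KK) \<gamma> (\<lambda>x. \<Sum>t\<in>UNIV. \<psi> t (x$t))
      = integral\<^sup>L \<mu> (\<lambda>x. \<Sum>t\<in>UNIV. \<psi> t (x$t)) - integral\<^sup>L \<nu> (\<lambda>x. \<Sum>t\<in>UNIV. \<psi> t (x$t))"
  proof (rule sint_eq[OF d])
    show "integrable \<mu> (\<lambda>x. \<Sum>t\<in>UNIV. \<psi> t (x$t))"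
      by (rule Bochner_Integration.integrable_sum) (rule it(1))
    show "integrable \<nu> (\<lambda>x. \<Sum>t\<in>UNIV. \<psi> t (x$t))"
      by (rule Bochner_Integration.integrable_sum) (rule it(2))
  qed
  also have "\<dots> = (\<Sum>t\<in>UNIV. integral\<^sup>L \<mu> (\<lambda>x. \<psi> t (x$t))) - (\<Sum>t\<in>UNIV. integral\<^sup>L \<nu> (\<lambda>x. \<psi> t (x$t)))"
    using it by (simp add: Bochner_Integration.integral_sum)
  also have "\<dots> = (\<Sum>t\<in>UNIV. integral\<^sup>L \<mu> (\<lambda>x. \<psi> t (x$t)) - integral\<^sup>L \<nu> (\<lambda>x. \<psi> t (x$t)))"
    by (simp add: sum_subtractf)
  also have "\<dots> = (\<Sum>t\<in>UNIV. sint (MK KK t) (marg KK t \<gamma>) (\<psi> t))"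
  proof (rule sum.cong[OF refl])
    fix t
    have "sint (MK KK t) (marg KK t \<gamma>) (\<psi> t) = sint (MOm KK) \<gamma> (\<lambda>x. \<psi> t (x$t))"
      by (rule marg_ca(2)[OF g psi])
    also have "\<dots> = integral\<^sup>L \<mu> (\<lambda>x. \<psi> t (x$t)) - integral\<^sup>L \<nu> (\<lambda>x. \<psi> t (x$t))"
      by (rule sint_eq[OF d it(1) it(2)])
    finally show "integral\<^sup>L \<mu> (\<lambda>x. \<psi> t (x$t)) - integral\<^sup>L \<nu> (\<lambda>x. \<psi> t (x$t)) = sint (MK KK t) (marg KK t \<gamma>) (\<psi> t)"
      by simp
  qed
  finally show ?thesis .
qed

lemma key_eq:
  fixes KK :: "'t::finite \<Rightarrow> 'd::finite \<Rightarrow> real set"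
  assumes g: "\<gamma> \<in> caOm KK" and psi: "\<And>t. \<psi> t \<in> Ct KK t"
    and Dn: "\<And>t \<xi>. \<xi> \<in> caK KK t \<Longrightarrow> D t \<xi> \<noteq> -\<infinity>"
  shows "ereal (sint (MOm KK) \<gamma> (\<lambda>x. \<Sum>t\<in>UNIV. \<psi> t (x$t))) - Dtot KK D \<gamma>
       = (\<Sum>t\<in>UNIV. ereal (sint (MK KK t) (marg KK t \<gamma>) (\<psi> t)) - D t (marg KK t \<gamma>))"
proof -
  define s where "s t = sint (MK KK t) (marg KK t \<gamma>) (\<psi> t)" for t
  have S: "sint (MOm KK) \<gamma> (\<lambda>x. \<Sum>t\<in>UNIV. \<psi> t (x$t)) = (\<Sum>t\<in>UNIV. s t)"
    unfolding s_def by (rule sint_sum[OF g psi])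
  have mc: "marg KK t \<gamma> \<in> caK KK t" for t by (rule marg_ca(1)[OF g])
  have Dn': "D t (marg KK t \<gamma>) \<noteq> -\<infinity>" for t by (rule Dn[OF mc])
  show ?thesis
  proof (cases "\<exists>t0. D t0 (marg KK t0 \<gamma>) = \<infinity>")
    case True
    then obtain t0 where t0: "D t0 (marg KK t0 \<gamma>) = \<infinity>" by blast
    have "Dtot KK D \<gamma> = \<infinity>" unfolding Dtot_def using t0 by (simp add: sum_Pinfty) blast
    then have L: "ereal (sint (MOm KK) \<gamma> (\<lambda>x. \<Sum>t\<in>UNIV. \<psi> t (x$t))) - Dtot KK D \<gamma> = -\<infinity>" by simp
    have "(\<Sum>t\<in>UNIV. ereal (s t) - D t (marg KK t \<gamma>)) = -\<infinity>"
    proof (rule sum_minf)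
      show "ereal (s t0) - D t0 (marg KK t0 \<gamma>) = -\<infinity>" using t0 by simp
      show "ereal (s t) - D t (marg KK t \<gamma>) \<noteq> \<infinity>" for t using Dn'[of t] by (cases "D t (marg KK t \<gamma>)") auto
    qed auto
    then show ?thesis using L unfolding s_def by simp
  next
    case False
    define d where "d t = real_of_ereal (D t (marg KK t \<gamma>))" for t
    have dd: "D t (marg KK t \<gamma>) = ereal (d t)" for t
      using False Dn'[of t] unfolding d_def by (cases "D t (marg KK t \<gamma>)") auto
    have "Dtot KK D \<gamma> = ereal (\<Sum>t\<in>UNIV. d t)" unfolding Dtot_def dd by simp
    then have L: "ereal (sint (MOm KK) \<gamma> (\<lambda>x. \<Sum>t\<in>UNIV. \<psi> t (x$t))) - Dtot KK D \<gamma> = ereal ((\<Sum>t\<in>UNIV. s t) - (\<Sum>t\<in>UNIV. d t))"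
      unfolding S by simp
    have "(\<Sum>t\<in>UNIV. ereal (s t) - D t (marg KK t \<gamma>)) = (\<Sum>t\<in>UNIV. ereal (s t - d t))"
      unfolding dd by simp
    also have "\<dots> = ereal ((\<Sum>t\<in>UNIV. s t) - (\<Sum>t\<in>UNIV. d t))" by (simp add: sum_subtractf)
    finally show ?thesis using L unfolding s_def by simp
  qed
qed

lemma sint_shift:
  assumes g: "\<gamma> \<in> ca1 N F" and p: "is_prob N \<gamma>" and psi: "\<psi> \<in> F"
  shows "sint N \<gamma> (\<lambda>v. \<psi> v + c) = sint N \<gamma> \<psi> + c"
proof -
  obtain \<mu> \<nu> where d: "signed_decomp N \<gamma> \<mu> \<nu>" and i: "\<forall>\<phi>\<in>F. integrable \<mu> \<phi> \<and> integrable \<nu> \<phi>"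
    using g unfolding ca1_def by blast
  have s: "sets \<mu> = sets N" "sets \<nu> = sets N" "finite_measure \<mu>" "finite_measure \<nu>"
    and gg: "\<gamma> = (\<lambda>A. measure \<mu> A - measure \<nu> A)" using d by (auto simp: signed_decomp_def)
  have sp: "space \<mu> = space N" "space \<nu> = space N"
    using sets_eq_imp_space_eq[OF s(1)] sets_eq_imp_space_eq[OF s(2)] by auto
  have ip: "integrable \<mu> \<psi>" "integrable \<nu> \<psi>" using i psi by auto
  have ic: "integrable \<mu> (\<lambda>v. c)" "integrable \<nu> (\<lambda>v. c)"
    using finite_measure.integrable_const[OF s(3)] finite_measure.integrable_const[OF s(4)] by auto
  have ipc: "integrable \<mu> (\<lambda>v. \<psi> v + c)" "integrable \<nu> (\<lambda>v. \<psi> v + c)"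
    using Bochner_Integration.integrable_add[OF ip(1) ic(1)] Bochner_Integration.integrable_add[OF ip(2) ic(2)] by auto
  have "sint N \<gamma> (\<lambda>v. \<psi> v + c) = integral\<^sup>L \<mu> (\<lambda>v. \<psi> v + c) - integral\<^sup>L \<nu> (\<lambda>v. \<psi> v + c)"
    by (rule sint_eq[OF d ipc])
  also have "\<dots> = (integral\<^sup>L \<mu> \<psi> - integral\<^sup>L \<nu> \<psi>) + c * (measure \<mu> (space \<mu>) - measure \<nu> (space \<nu>))"
    using ip ic by (simp add: Bochner_Integration.integral_add algebra_simps)
  also have "measure \<mu> (space \<mu>) - measure \<nu> (space \<nu>) = 1"
    using p unfolding is_prob_def gg sp by simp
  also have "integral\<^sup>L \<mu> \<psi> - integral\<^sup>L \<nu> \<psi> = sint N \<gamma> \<psi>"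
    by (rule sint_eq[OF d ip, symmetric])
  finally show ?thesis by simp
qed



lemma ereal_add_sub_cancel: "(x + ereal r) - ereal r = (x::ereal)"
  by (cases x) auto

lemma ereal_neg_add: "a \<noteq> -\<infinity> \<Longrightarrow> b \<noteq> -\<infinity> \<Longrightarrow> - (a + b) = - a + - (b::ereal)"
  by (cases a; cases b) auto

lemma ereal_uminus_sum:
  fixes f :: "'a \<Rightarrow> ereal"
  assumes "\<And>t. t \<in> I \<Longrightarrow> f t \<noteq> -\<infinity>"
  shows "- (\<Sum>t\<in>I. f t) = (\<Sum>t\<in>I. - f t)"
  using assms
proof (induction I rule: infinite_finite_induct)
  case (insert s I)
  have "- (\<Sum>t\<in>insert s I. f t) = - (f s + (\<Sum>t\<in>I. f t))" using insert.hyps by simp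
  also have "\<dots> = - f s + - (\<Sum>t\<in>I. f t)"
    by (rule ereal_neg_add) (use insert.prems in \<open>auto intro!: sum_not_minf\<close>)
  also have "- (\<Sum>t\<in>I. f t) = (\<Sum>t\<in>I. - f t)" using insert by auto
  finally show ?case using insert.hyps by simp
qed simp_all

theorem lemma3p6:
  fixes KK :: "'t::finite \<Rightarrow> 'd::finite \<Rightarrow> real set"
    and E :: "'t \<Rightarrow> (real^'d \<Rightarrow> real) set"
    and D :: "'t \<Rightarrow> ((real^'d) set \<Rightarrow> real) \<Rightarrow> ereal"
  assumes T_ge1: "CARD('t) \<ge> 2"
    and closed_K: "\<And>t j. closed (KK t j)"
    and E_sub: "\<And>t. E t \<subseteq> Ct KK t"
    and E_zero: "\<And>t. (\<lambda>v. 0) \<in> E t"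
    and E_add: "\<And>t f g. f \<in> E t \<Longrightarrow> g \<in> E t \<Longrightarrow> (\<lambda>v. f v + g v) \<in> E t"
    and E_scale: "\<And>t f c. f \<in> E t \<Longrightarrow> (\<lambda>v. c * f v) \<in> E t"
    and E_const: "\<And>t f c. f \<in> E t \<Longrightarrow> (\<lambda>v. f v + c) \<in> E t"
    and D_pc: "\<And>t. proper_convex_on (caK KK t) (D t)"
    and D_lsc: "\<And>t. lsc_on (weak_top (MK KK t) (caK KK t) (E t)) (D t)"
  shows "(\<forall>t. lsc_on (weak_top (MOm KK) (caOm KK) (testE E)) (\<lambda>\<gamma>. D t (marg KK t \<gamma>)))
       \<and> lsc_on (weak_top (MOm KK) (caOm KK) (testE E)) (Dtot KK D)
       \<and> ((\<forall>t. \<forall>\<gamma>\<in>caK KK t. D t \<gamma> < \<infinity> \<longrightarrow> is_prob (MK KK t) \<gamma>) \<longrightarrow>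
          (\<forall>\<phi>. (\<forall>t. \<phi> t \<in> E t) \<longrightarrow>
             UU KK D \<phi> = (\<Sum>t\<in>UNIV. Ut KK D t (\<phi> t))
           \<and> (\<Sum>t\<in>UNIV. Ut KK D t (\<phi> t)) = (\<Sum>t\<in>UNIV. - Vt KK D t (\<lambda>v. - \<phi> t v))
           \<and> SU KK D \<phi> = (\<Sum>t\<in>UNIV. SUt KK D t (\<phi> t))))"
proof -
  have Dn: "\<And>t \<xi>. \<xi> \<in> caK KK t \<Longrightarrow> D t \<xi> \<noteq> -\<infinity>"
    using D_pc unfolding proper_convex_on_def by blast
  have Dex: "\<And>t. \<exists>\<xi>\<in>caK KK t. D t \<xi> < \<infinity>"
    using D_pc unfolding proper_convex_on_def by blast
  have caKne: "\<And>t. caK KK t \<noteq> {}" using Dex by blast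
  have Ene: "\<And>t. E t \<noteq> {}" using E_zero by blast
  have inT: "\<And>t \<phi>. \<phi> \<in> E t \<Longrightarrow> (\<lambda>x. \<phi> (x$t)) \<in> testE E"
    unfolding testE_def by blast
  have tne: "testE E \<noteq> {}" using inT[OF E_zero] by blast
  have topX: "topspace (weak_top (MOm KK) (caOm KK) (testE E)) = caOm KK"
    by (rule weak_top_space[OF tne])
  have P1: "lsc_on (weak_top (MOm KK) (caOm KK) (testE E)) (\<lambda>\<gamma>. D t (marg KK t \<gamma>))" for t
  proof (rule lsc_comp[where D="D t" and f="marg KK t"])
    show "\<And>\<gamma>. \<gamma> \<in> caOm KK \<Longrightarrow> marg KK t \<gamma> \<in> caK KK t" by (rule marg_ca(1))
    show "\<exists>\<phi>'\<in>testE E. \<forall>\<gamma>\<in>caOm KK. sint (MK KK t) (marg KK t \<gamma>) \<phi> = sint (MOm KK) \<gamma> \<phi>'"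
      if ph: "\<phi> \<in> E t" for \<phi>
    proof (intro bexI ballI)
      show "(\<lambda>x. \<phi> (x$t)) \<in> testE E" by (rule inT[OF ph])
      fix \<gamma> assume "\<gamma> \<in> caOm KK"
      then show "sint (MK KK t) (marg KK t \<gamma>) \<phi> = sint (MOm KK) \<gamma> (\<lambda>x. \<phi> (x$t))"
        using marg_ca(2) E_sub ph by blast
    qed
    show "testE E \<noteq> {}" by (rule tne)
    show "E t \<noteq> {}" by (rule Ene)
    show "lsc_on (weak_top (MK KK t) (caK KK t) (E t)) (D t)" by (rule D_lsc)
  qed
  have Dtot_eq: "Dtot KK D = (\<lambda>\<gamma>. \<Sum>t\<in>UNIV. D t (marg KK t \<gamma>))"
    by (rule ext) (simp add: Dtot_def)
  have P2: "lsc_on (weak_top (MOm KK) (caOm KK) (testE E)) (Dtot KK D)"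
    unfolding Dtot_eq
  proof (rule lsc_sum)
    show "lsc_on (weak_top (MOm KK) (caOm KK) (testE E)) (\<lambda>\<gamma>. D t (marg KK t \<gamma>))" for t by (rule P1)
    show "D t (marg KK t \<gamma>) \<noteq> -\<infinity>" if "\<gamma> \<in> topspace (weak_top (MOm KK) (caOm KK) (testE E))" for t \<gamma>
      using that topX Dn marg_ca(1) by metis
  qed simp
  have P3: "\<forall>\<phi>. (\<forall>t. \<phi> t \<in> E t) \<longrightarrow>
             UU KK D \<phi> = (\<Sum>t\<in>UNIV. Ut KK D t (\<phi> t))
           \<and> (\<Sum>t\<in>UNIV. Ut KK D t (\<phi> t)) = (\<Sum>t\<in>UNIV. - Vt KK D t (\<lambda>v. - \<phi> t v))
           \<and> SU KK D \<phi> = (\<Sum>t\<in>UNIV. SUt KK D t (\<phi> t))"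
    if dom: "\<forall>t. \<forall>\<gamma>\<in>caK KK t. D t \<gamma> < \<infinity> \<longrightarrow> is_prob (MK KK t) \<gamma>"
  proof -
    have VVeq: "VV KK D \<psi> = (\<Sum>t\<in>UNIV. Vt KK D t (\<psi> t))" if psE: "\<And>t. \<psi> t \<in> E t" for \<psi>
    proof (rule antisym)
      have psC: "\<And>t. \<psi> t \<in> Ct KK t" using psE E_sub by blast
      show "VV KK D \<psi> \<le> (\<Sum>t\<in>UNIV. Vt KK D t (\<psi> t))"
        unfolding VV_def
      proof (rule SUP_least)
        fix \<gamma> assume g: "\<gamma> \<in> caOm KK"
        have "ereal (sint (MOm KK) \<gamma> (\<lambda>x. \<Sum>t\<in>UNIV. \<psi> t (x$t))) - Dtot KK D \<gamma>
            = (\<Sum>t\<in>UNIV. ereal (sint (MK KK t) (marg KK t \<gamma>) (\<psi> t)) - D t (marg KK t \<gamma>))"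
          by (rule key_eq[OF g psC Dn])
        also have "\<dots> \<le> (\<Sum>t\<in>UNIV. Vt KK D t (\<psi> t))"
        proof (rule sum_mono)
          fix t
          show "ereal (sint (MK KK t) (marg KK t \<gamma>) (\<psi> t)) - D t (marg KK t \<gamma>) \<le> Vt KK D t (\<psi> t)"
            unfolding Vt_def by (rule SUP_upper[OF marg_ca(1)[OF g]])
        qed
        finally show "ereal (sint (MOm KK) \<gamma> (\<lambda>x. \<Sum>t\<in>UNIV. \<psi> t (x$t))) - Dtot KK D \<gamma> \<le> (\<Sum>t\<in>UNIV. Vt KK D t (\<psi> t))" .
      qed
      show "(\<Sum>t\<in>UNIV. Vt KK D t (\<psi> t)) \<le> VV KK D \<psi>"
        unfolding Vt_def
      proof (rule sum_SUP_le)
        show "finite (UNIV :: 't set)" by simp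
        show "\<exists>\<xi>\<in>caK KK t. ereal (sint (MK KK t) \<xi> (\<psi> t)) - D t \<xi> \<noteq> -\<infinity>" for t
        proof -
          obtain \<xi> where \<xi>: "\<xi> \<in> caK KK t" "D t \<xi> < \<infinity>" using Dex by blast
          have "ereal (sint (MK KK t) \<xi> (\<psi> t)) - D t \<xi> \<noteq> -\<infinity>"
            using \<xi> Dn[OF \<xi>(1)] by (cases "D t \<xi>") auto
          then show ?thesis using \<xi> by blast
        qed
        show "ereal (sint (MK KK t) \<xi> (\<psi> t)) - D t \<xi> \<noteq> \<infinity>" if "\<xi> \<in> caK KK t" for t \<xi>
          using Dn[OF that] by (cases "D t \<xi>") auto
        show "(\<Sum>t\<in>UNIV. ereal (sint (MK KK t) (g t) (\<psi> t)) - D t (g t)) \<le> VV KK D \<psi>"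
          if gA: "\<And>t. t \<in> UNIV \<Longrightarrow> g t \<in> caK KK t" for g
        proof (cases "\<exists>t0. D t0 (g t0) = \<infinity>")
          case True
          then obtain t0 where t0: "D t0 (g t0) = \<infinity>" by blast
          have "(\<Sum>t\<in>UNIV. ereal (sint (MK KK t) (g t) (\<psi> t)) - D t (g t)) = -\<infinity>"
          proof (rule sum_minf)
            show "ereal (sint (MK KK t0) (g t0) (\<psi> t0)) - D t0 (g t0) = -\<infinity>" using t0 by simp
            show "ereal (sint (MK KK t) (g t) (\<psi> t)) - D t (g t) \<noteq> \<infinity>" for t
              using Dn[OF gA[of t]] by (cases "D t (g t)") auto
          qed auto
          then show ?thesis by simp
        next
          case False
          have gp: "is_prob (MK KK t) (g t)" for t
            using dom gA[of t] False by (simp add: top.not_eq_extremum)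
          obtain P where P: "P \<in> caOm KK" "\<And>t. marg KK t P = g t"
            using product_exists[OF gA gp] by blast
          have "(\<Sum>t\<in>UNIV. ereal (sint (MK KK t) (g t) (\<psi> t)) - D t (g t))
              = (\<Sum>t\<in>UNIV. ereal (sint (MK KK t) (marg KK t P) (\<psi> t)) - D t (marg KK t P))"
            using P(2) by simp
          also have "\<dots> = ereal (sint (MOm KK) P (\<lambda>x. \<Sum>t\<in>UNIV. \<psi> t (x$t))) - Dtot KK D P"
            by (rule key_eq[OF P(1) psC Dn, symmetric])
          also have "\<dots> \<le> VV KK D \<psi>"
            unfolding VV_def by (rule SUP_upper[OF P(1)])
          finally show ?thesis .
        qed
      qed
    qed
    have Vtn: "Vt KK D t \<psi> \<noteq> -\<infinity>" for t \<psi>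
    proof -
      obtain \<xi> where \<xi>: "\<xi> \<in> caK KK t" "D t \<xi> < \<infinity>" using Dex by blast
      have ne: "ereal (sint (MK KK t) \<xi> \<psi>) - D t \<xi> \<noteq> -\<infinity>"
        using \<xi> Dn[OF \<xi>(1)] by (cases "D t \<xi>") auto
      have "ereal (sint (MK KK t) \<xi> \<psi>) - D t \<xi> \<le> Vt KK D t \<psi>"
        unfolding Vt_def by (rule SUP_upper[OF \<xi>(1)])
      then show ?thesis using ne by auto
    qed
    have Vt_shift: "Vt KK D t (\<lambda>v. \<psi> v + c) = Vt KK D t \<psi> + ereal c" if psE: "\<psi> \<in> E t" for t \<psi> c
    proof -
      have psC: "\<psi> \<in> Ct KK t" using psE E_sub by blast
      have trm: "ereal (sint (MK KK t) \<xi> (\<lambda>v. \<psi> v + c)) - D t \<xi> = (ereal (sint (MK KK t) \<xi> \<psi>) - D t \<xi>) + ereal c"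
        if xi: "\<xi> \<in> caK KK t" for \<xi>
      proof (cases "D t \<xi> = \<infinity>")
        case True then show ?thesis by simp
      next
        case False
        then have "is_prob (MK KK t) \<xi>" using dom xi by (simp add: top.not_eq_extremum)
        then have "sint (MK KK t) \<xi> (\<lambda>v. \<psi> v + c) = sint (MK KK t) \<xi> \<psi> + c"
          by (rule sint_shift[OF xi _ psC])
        then show ?thesis using False Dn[OF xi] by (cases "D t \<xi>") auto
      qed
      have "Vt KK D t (\<lambda>v. \<psi> v + c) = (SUP \<xi>\<in>caK KK t. (ereal (sint (MK KK t) \<xi> \<psi>) - D t \<xi>) + ereal c)"
        unfolding Vt_def using trm by (intro SUP_cong) auto
      also have "\<dots> = Vt KK D t \<psi> + ereal c"
        unfolding Vt_def by (rule SUP_ereal_add_left[OF caKne]) simp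
      finally show ?thesis .
    qed
    have Ut_shift: "Ut KK D t (\<lambda>v. \<psi> v + c) = Ut KK D t \<psi> + ereal c" if psE: "\<psi> \<in> E t" for t \<psi> c
    proof -
      have m: "(\<lambda>v. - \<psi> v) \<in> E t" using E_scale[OF psE, of "-1"] by simp
      have "(\<lambda>v. - (\<psi> v + c)) = (\<lambda>v. - \<psi> v + (- c))" by auto
      then have "Vt KK D t (\<lambda>v. - (\<psi> v + c)) = Vt KK D t (\<lambda>v. - \<psi> v) + ereal (- c)"
        using Vt_shift[OF m, of "- c"] by simp
      then show ?thesis unfolding Ut_def by (cases "Vt KK D t (\<lambda>v. - \<psi> v)") auto
    qed
    have UUeq: "UU KK D \<phi> = (\<Sum>t\<in>UNIV. Ut KK D t (\<phi> t))" if phE: "\<And>t. \<phi> t \<in> E t" for \<phi>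
    proof -
      have m: "(\<lambda>v. - \<phi> t v) \<in> E t" for t using E_scale[OF phE[of t], of "-1"] by simp
      have "UU KK D \<phi> = - (\<Sum>t\<in>UNIV. Vt KK D t (\<lambda>v. - \<phi> t v))"
        unfolding UU_def using VVeq[of "\<lambda>t v. - \<phi> t v"] m by simp
      also have "\<dots> = (\<Sum>t\<in>UNIV. - Vt KK D t (\<lambda>v. - \<phi> t v))"
        by (rule ereal_uminus_sum) (rule Vtn)
      also have "\<dots> = (\<Sum>t\<in>UNIV. Ut KK D t (\<phi> t))" unfolding Ut_def by simp
      finally show ?thesis .
    qed
    show ?thesis
    proof (intro allI impI conjI)
      fix \<phi> assume phE: "\<forall>t. \<phi> t \<in> E t"
      show "UU KK D \<phi> = (\<Sum>t\<in>UNIV. Ut KK D t (\<phi> t))" using UUeq phE by blast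
      show "(\<Sum>t\<in>UNIV. Ut KK D t (\<phi> t)) = (\<Sum>t\<in>UNIV. - Vt KK D t (\<lambda>v. - \<phi> t v))"
        unfolding Ut_def by simp
      have SUt_eq: "SUt KK D t (\<phi> t) = Ut KK D t (\<phi> t)" for t
      proof -
        have "SUt KK D t (\<phi> t) = (SUP \<alpha>\<in>(UNIV::real set). Ut KK D t (\<phi> t))"
          unfolding SUt_def using Ut_shift phE by (simp add: ereal_add_sub_cancel)
        then show ?thesis by simp
      qed
      have "SU KK D \<phi> = (SUP \<beta>\<in>(UNIV::(real^'t) set). (\<Sum>t\<in>UNIV. Ut KK D t (\<phi> t)))"
        unfolding SU_def
      proof (rule SUP_cong[OF refl])
        fix \<beta> :: "real^'t"
        have "UU KK D (\<lambda>t v. \<phi> t v + \<beta>$t) = (\<Sum>t\<in>UNIV. Ut KK D t (\<lambda>v. \<phi> t v + \<beta>$t))"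
          using UUeq[of "\<lambda>t v. \<phi> t v + \<beta>$t"] E_const phE by blast
        also have "\<dots> = (\<Sum>t\<in>UNIV. Ut KK D t (\<phi> t) + ereal (\<beta>$t))"
          using Ut_shift phE by simp
        also have "\<dots> = (\<Sum>t\<in>UNIV. Ut KK D t (\<phi> t)) + ereal (\<Sum>t\<in>UNIV. \<beta>$t)"
          by (simp add: sum.distrib)
        finally show "UU KK D (\<lambda>t v. \<phi> t v + \<beta>$t) - ereal (\<Sum>t\<in>UNIV. \<beta>$t) = (\<Sum>t\<in>UNIV. Ut KK D t (\<phi> t))"
          by (simp add: ereal_add_sub_cancel)
      qed
      also have "\<dots> = (\<Sum>t\<in>UNIV. SUt KK D t (\<phi> t))" using SUt_eq by simp
      finally show "SU KK D \<phi> = (\<Sum>t\<in>UNIV. SUt KK D t (\<phi> t))" .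
    qed
  qed
  show ?thesis using P1 P2 P3 by blast
qed


end
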